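(* If $G$ and $H$ are graphs on the same vertex set $V$, and $G\cup H$ denotes the graph on $V$ with edge set $E(G)\cup E(H)$, then \[\bar{\vartheta}(G\cup H)\le\bar{\vartheta}(G)\,\bar{\vartheta}(H).\]
   Context: Graphs are finite, simple and undirected. For a real $k>1$, a strict vector $k$-coloring of $G$ is a map $\varphi$ from $V(G)$ to the unit sphere of some $\mathbb{R}^d$ with $\varphi(u)^T\varphi(v)=-\frac1{k-1}$ whenever $u\sim v$; $\bar{\vartheta}(G)$ is the infimum of such $k$, and equals $\vartheta(\overline{G})$, the Lovász theta function of the complement of $G$. *)

theory Defs
  imports Complex_Main
begin

definition simple_graph :: "'a set \<Rightarrow> 'a set set \<Rightarrow> bool" where
  "simple_graph V E \<longleftrightarrow> finite V \<and>
     (\<forall>e\<in>E. \<exists>u v. u \<noteq> v \<and> u \<in> V \<and> v \<in> V \<and> e = {u, v})"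

definition strict_vector_coloring ::
  "'a set \<Rightarrow> 'a set set \<Rightarrow> real \<Rightarrow> nat \<Rightarrow> ('a \<Rightarrow> nat \<Rightarrow> real) \<Rightarrow> bool" where
  "strict_vector_coloring V E k d phi \<longleftrightarrow>
     (\<forall>v\<in>V. (\<Sum>i<d. (phi v i)^2) = 1) \<and>
     (\<forall>u\<in>V. \<forall>v\<in>V. {u, v} \<in> E \<longrightarrow> (\<Sum>i<d. phi u i * phi v i) = - 1 / (k - 1))"

definition theta_bar :: "'a set \<Rightarrow> 'a set set \<Rightarrow> real" where
  "theta_bar V E = Inf {k. k > 1 \<and> (\<exists>d phi. strict_vector_coloring V E k d phi)}"

end

theory Submission
  imports Defs
begin
lemma tensor_sum:
  fixes f g :: "nat \<Rightarrow> real"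
  shows "(\<Sum>i<d1*d2. f (i div d2) * g (i mod d2)) = (\<Sum>i<d1. f i) * (\<Sum>j<d2. g j)"
proof (induction d1)
  case 0 then show ?case by simp
next
  case (Suc d1)
  have "(\<Sum>i<Suc d1*d2. f (i div d2) * g (i mod d2)) =
     (\<Sum>i\<in>{0..<d1*d2}. f (i div d2) * g (i mod d2)) + (\<Sum>i\<in>{d1*d2..<d1*d2+d2}. f (i div d2) * g (i mod d2))"
    by (simp add: atLeast0LessThan[symmetric] sum.atLeastLessThan_concat add.commute)
  also have "(\<Sum>i\<in>{d1*d2..<d1*d2+d2}. f (i div d2) * g (i mod d2)) = (\<Sum>j\<in>{0..<d2}. f ((j + d1*d2) div d2) * g ((j+d1*d2) mod d2))"
    using sum.shift_bounds_nat_ivl[of "\<lambda>i. f (i div d2) * g (i mod d2)" 0 "d1*d2" d2] by (simp add: add.commute)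
  also have "\<dots> = (\<Sum>j\<in>{0..<d2}. f d1 * g j)"
    by (rule sum.cong) auto
  finally show ?case using Suc by (simp add: atLeast0LessThan sum_distrib_left distrib_right sum.distrib)
qed

lemma shift_sum:
  fixes k :: real and x y :: "nat \<Rightarrow> real"
  assumes "k > 1"
  shows "(\<Sum>i<Suc d. (if i=0 then 1/sqrt k else sqrt((k-1)/k) * x (i-1)) *
                     (if i=0 then 1/sqrt k else sqrt((k-1)/k) * y (i-1)))
        = 1/k + (k-1)/k * (\<Sum>i<d. x i * y i)"
proof -
  have s: "sqrt((k-1)/k) * sqrt((k-1)/k) = (k-1)/k" using assms by simp
  have q: "1/sqrt k * (1/sqrt k) = 1/k" using assms by (simp add: real_sqrt_mult[symmetric])
  have "(\<Sum>i<Suc d. (if i=0 then 1/sqrt k else sqrt((k-1)/k) * x (i-1)) *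
                     (if i=0 then 1/sqrt k else sqrt((k-1)/k) * y (i-1)))
     = 1/sqrt k * (1/sqrt k) + (\<Sum>i<d. (sqrt((k-1)/k) * x i) * (sqrt((k-1)/k) * y i))"
    by (subst sum.lessThan_Suc_shift) (simp del: sum.lessThan_Suc)
  also have "(\<Sum>i<d. (sqrt((k-1)/k) * x i) * (sqrt((k-1)/k) * y i)) = (\<Sum>i<d. ((k-1)/k) * (x i * y i))"
  proof (rule sum.cong)
    fix i
    have "(sqrt((k-1)/k) * x i) * (sqrt((k-1)/k) * y i) = (sqrt((k-1)/k) * sqrt((k-1)/k)) * (x i * y i)"
      by (simp only: mult_ac)
    then show "(sqrt((k-1)/k) * x i) * (sqrt((k-1)/k) * y i) = ((k-1)/k) * (x i * y i)"
      by (simp only: s)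
  qed simp
  finally show ?thesis unfolding q by (simp add: sum_distrib_left del: sum.lessThan_Suc)
qed

lemma shift_sum_c:
  fixes k :: real and x :: "nat \<Rightarrow> real"
  shows "(\<Sum>i<Suc d. (if i=0 then 1/sqrt k else sqrt((k-1)/k) * x (i-1)) *
                     (if i=0 then 1 else 0)) = 1/sqrt k"
  by (subst sum.lessThan_Suc_shift) (simp del: sum.lessThan_Suc)

lemma lin_sum:
  fixes a b c :: "nat \<Rightarrow> real"
  shows "(\<Sum>i<D. (s*(a i - c i * t)) * (s*(b i - c i * t))) =
     s^2 * ((\<Sum>i<D. a i * b i) - t * (\<Sum>i<D. a i * c i) - t * (\<Sum>i<D. b i * c i) + t^2 * (\<Sum>i<D. c i * c i))"
  by (simp add: algebra_simps power2_eq_square sum.distrib sum_subtractf sum_distrib_left)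

lemma tensor_ip:
  fixes p q r w :: "nat \<Rightarrow> real"
  shows "(\<Sum>i<D1*D2. (p (i div D2) * q (i mod D2)) * (r (i div D2) * w (i mod D2)))
       = (\<Sum>i<D1. p i * r i) * (\<Sum>j<D2. q j * w j)"
proof -
  have "(\<Sum>i<D1*D2. (p (i div D2) * q (i mod D2)) * (r (i div D2) * w (i mod D2)))
      = (\<Sum>i<D1*D2. (\<lambda>j. p j * r j) (i div D2) * (\<lambda>j. q j * w j) (i mod D2))"
    by (rule sum.cong) (simp_all add: mult_ac)
  then show ?thesis using tensor_sum[where f="\<lambda>j. p j * r j" and g="\<lambda>j. q j * w j"] by simp
qed

lemma product_coloring:
  assumes cx: "strict_vector_coloring V EG k d1 x" and k: "k > 1"
      and cy: "strict_vector_coloring V EH l d2 y" and l: "l > 1"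
  shows "\<exists>d phi. strict_vector_coloring V (EG \<union> EH) (k*l) d phi"
proof -
  define ax where "ax v i = (if i=0 then 1/sqrt k else sqrt((k-1)/k) * x v (i-1))" for v i
  define ay where "ay v i = (if i=0 then 1/sqrt l else sqrt((l-1)/l) * y v (i-1))" for v i
  define e where "e i = (if i=0 then 1 else (0::real))" for i :: nat
  define D2 where "D2 = Suc d2"
  define D where "D = Suc d1 * D2"
  define a where "a v i = ax v (i div D2) * ay v (i mod D2)" for v i
  define c where "c i = e (i div D2) * e (i mod D2)" for i
  define m where "m = k*l"
  define s where "s = sqrt(m/(m-1))"
  define t where "t = 1/sqrt m"
  have m1: "m > 1" unfolding m_def using k l mult_strict_mono[of 1 k 1 l] by simp
  have s2: "s^2 = m/(m-1)" unfolding s_def using m1 by simp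
  have t2: "t^2 = 1/m" unfolding t_def using m1 by (simp add: power_divide)
  have tt: "t*t = 1/m" using t2 by (simp add: power2_eq_square)
  have ipx: "(\<Sum>i<Suc d1. ax u i * ax v i) = 1/k + (k-1)/k * (\<Sum>i<d1. x u i * x v i)" for u v
    unfolding ax_def using shift_sum[OF k] by simp
  have ipy: "(\<Sum>i<D2. ay u i * ay v i) = 1/l + (l-1)/l * (\<Sum>i<d2. y u i * y v i)" for u v
    unfolding ay_def D2_def using shift_sum[OF l] by simp
  have cx': "(\<Sum>i<Suc d1. ax u i * e i) = 1/sqrt k" for u
    unfolding ax_def e_def using shift_sum_c by simp
  have cy': "(\<Sum>i<D2. ay u i * e i) = 1/sqrt l" for u
    unfolding ay_def e_def D2_def using shift_sum_c by simp
  have ee1: "(\<Sum>i<Suc d1. e i * e i) = 1" unfolding e_def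
    by (subst sum.lessThan_Suc_shift) (simp del: sum.lessThan_Suc)
  have ee2: "(\<Sum>i<D2. e i * e i) = 1" unfolding e_def D2_def
    by (subst sum.lessThan_Suc_shift) (simp del: sum.lessThan_Suc)
  have A: "(\<Sum>i<D. a u i * a v i) = (\<Sum>i<Suc d1. ax u i * ax v i) * (\<Sum>j<D2. ay u j * ay v j)" for u v
    unfolding a_def D_def by (rule tensor_ip)
  have AC: "(\<Sum>i<D. a u i * c i) = t" for u
    unfolding a_def c_def D_def tensor_ip cx' cy'
    by (simp add: t_def m_def real_sqrt_mult)
  have CC: "(\<Sum>i<D. c i * c i) = 1"
    unfolding c_def D_def tensor_ip ee1 ee2 by simp
  define phi where "phi v i = s * (a v i - c i * t)" for v i
  have P: "(\<Sum>i<D. phi u i * phi v i) = m/(m-1) * ((\<Sum>i<D. a u i * a v i) - 1/m)" for u v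
    unfolding phi_def lin_sum AC CC s2 t2 tt by simp
  have "strict_vector_coloring V (EG \<union> EH) m D phi"
    unfolding strict_vector_coloring_def
  proof (intro conjI ballI impI)
    fix v assume v: "v \<in> V"
    have "(\<Sum>i<d1. x v i * x v i) = 1" using cx v unfolding strict_vector_coloring_def power2_eq_square by auto
    moreover have "(\<Sum>i<d2. y v i * y v i) = 1" using cy v unfolding strict_vector_coloring_def power2_eq_square by auto
    ultimately have "(\<Sum>i<D. a v i * a v i) = 1" using k l unfolding A ipx ipy by (simp add: add_divide_distrib[symmetric])
    then show "(\<Sum>i<D. (phi v i)^2) = 1" using P[of v v] m1 by (simp add: power2_eq_square field_simps)
  next
    fix u v assume u: "u \<in> V" and v: "v \<in> V" and E: "{u, v} \<in> EG \<union> EH"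
    have "(\<Sum>i<D. a u i * a v i) = 0"
    proof (cases "{u,v} \<in> EG")
      case True
      then have "(\<Sum>i<d1. x u i * x v i) = -1/(k-1)" using cx u v unfolding strict_vector_coloring_def by auto
      then have "(\<Sum>i<Suc d1. ax u i * ax v i) = 0" using k unfolding ipx by simp
      then show ?thesis unfolding A by simp
    next
      case False
      then have "{u,v} \<in> EH" using E by auto
      then have "(\<Sum>i<d2. y u i * y v i) = -1/(l-1)" using cy u v unfolding strict_vector_coloring_def by auto
      then have "(\<Sum>i<D2. ay u i * ay v i) = 0" using l unfolding ipy by simp
      then show ?thesis unfolding A by simp
    qed
    then show "(\<Sum>i<D. phi u i * phi v i) = - 1 / (m - 1)" using P[of u v] m1 by (simp add: field_simps)
  qed
  then show ?thesis unfolding m_def by blast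
qed

lemma delta_sum:
  fixes p q :: nat
  assumes "p < n" "q < n"
  shows "(\<Sum>i<n. (if i = p then 1 else (0::real)) * (if i = q then 1 else 0)) = (if p = q then 1 else 0)"
    and "(\<Sum>i<n. (if i = p then 1 else (0::real)) * 1) = 1"
  using assms by (auto simp: if_distrib[of "\<lambda>x. x * _"] cong: if_cong)

lemma simplex_coloring:
  assumes "simple_graph V E"
  shows "\<exists>k>1. \<exists>d phi. strict_vector_coloring V E k d phi"
proof -
  have fin: "finite V" using assms unfolding simple_graph_def by auto
  obtain g where g: "bij_betw g V {0..<card V}" using ex_bij_betw_finite_nat[OF fin] by blast
  define n where "n = card V + 2"
  have gn: "g v < n" if "v \<in> V" for v proof -
    have "g v \<in> {0..<card V}" using g that unfolding bij_betw_def by blast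
    then show ?thesis unfolding n_def by simp
  qed
  define r :: real where "r = real n"
  have r2: "r \<ge> 2" unfolding r_def n_def by simp
  define s where "s = sqrt (r/(r-1))"
  have s2: "s^2 = r/(r-1)" unfolding s_def using r2 by simp
  define phi where "phi v i = s * ((if i = g v then 1 else 0) - (\<lambda>_. 1::real) i * (1/r))" for v i
  have P: "(\<Sum>i<n. phi u i * phi v i) = r/(r-1) * ((if g u = g v then 1 else 0) - 1/r)"
    if "u \<in> V" "v \<in> V" for u v
  proof -
    have "(\<Sum>i<n. phi u i * phi v i) = r/(r-1) * ((if g u = g v then 1 else 0) - 1/r * 1 - 1/r * 1 + (1/r)^2 * r)"
      unfolding phi_def lin_sum s2 using delta_sum[OF gn[OF that(1)] gn[OF that(2)]] delta_sum(2)[OF gn[OF that(2)] gn[OF that(2)]]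
      by (simp add: r_def)
    also have "\<dots> = r/(r-1) * ((if g u = g v then 1 else 0) - 1/r)" using r2 by (simp add: power2_eq_square)
    finally show ?thesis .
  qed
  have "strict_vector_coloring V E r n phi"
    unfolding strict_vector_coloring_def
  proof (intro conjI ballI impI)
    fix v assume v: "v \<in> V"
    show "(\<Sum>i<n. (phi v i)^2) = 1" proof -
      have "r * (1 - 1/r) = r - 1" using r2 by (simp add: right_diff_distrib)
      then show ?thesis using P[OF v v] r2 by (simp add: power2_eq_square)
    qed
  next
    fix u v assume u: "u \<in> V" and v: "v \<in> V" and E: "{u, v} \<in> E"
    obtain u' v' where "u' \<noteq> v'" "{u,v} = {u',v'}" using assms E unfolding simple_graph_def by blast
    then have "u \<noteq> v" by (metis doubleton_eq_iff)
    then have "g u \<noteq> g v" using g u v unfolding bij_betw_def inj_on_def by blast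
    then show "(\<Sum>i<n. phi u i * phi v i) = - 1 / (r - 1)" using P[OF u v] r2 by simp
  qed
  then show ?thesis using r2 by (intro exI[of _ r]) auto
qed

theorem corollary4p5:
  fixes V :: "'a set" and EG EH :: "'a set set"
  assumes "simple_graph V EG" and "simple_graph V EH"
  shows "theta_bar V (EG \<union> EH) \<le> theta_bar V EG * theta_bar V EH"
proof -
  define S where "S X = {k. k > 1 \<and> (\<exists>d phi. strict_vector_coloring V X k d phi)}" for X
  have tb: "theta_bar V X = Inf (S X)" for X unfolding theta_bar_def S_def by simp
  have bdd: "bdd_below (S X)" for X unfolding S_def by (rule bdd_belowI[of _ 1]) auto
  have neG: "S EG \<noteq> {}" using simplex_coloring[OF assms(1)] unfolding S_def by auto
  have neH: "S EH \<noteq> {}" using simplex_coloring[OF assms(2)] unfolding S_def by auto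
  define a where "a = Inf (S EG)"
  define b where "b = Inf (S EH)"
  define c where "c = Inf (S (EG \<union> EH))"
  have a1: "a \<ge> 1" unfolding a_def by (rule cInf_greatest[OF neG]) (auto simp: S_def)
  have b1: "b \<ge> 1" unfolding b_def by (rule cInf_greatest[OF neH]) (auto simp: S_def)
  have prod: "c \<le> k * l" if "k \<in> S EG" "l \<in> S EH" for k l
  proof -
    from that obtain d1 x d2 y where "k > 1" "strict_vector_coloring V EG k d1 x"
      "l > 1" "strict_vector_coloring V EH l d2 y" unfolding S_def by auto
    then obtain d phi where "strict_vector_coloring V (EG \<union> EH) (k*l) d phi"
      using product_coloring by blast
    moreover have "k * l > 1" using \<open>k > 1\<close> \<open>l > 1\<close> mult_strict_mono[of 1 k 1 l] by simp
    ultimately have "k * l \<in> S (EG \<union> EH)" unfolding S_def by auto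
    then show ?thesis unfolding c_def by (rule cInf_lower[OF _ bdd])
  qed
  have "c / l \<le> a" if l: "l \<in> S EH" for l
  proof -
    have l0: "l > 0" using l unfolding S_def by auto
    show ?thesis unfolding a_def
    proof (rule cInf_greatest[OF neG])
      fix k assume "k \<in> S EG"
      then have "c \<le> k * l" using prod l by blast
      then show "c / l \<le> k" using l0 by (simp add: divide_le_eq)
    qed
  qed
  then have "c / a \<le> l" if "l \<in> S EH" for l
    using that a1 by (smt (verit) S_def divide_le_eq mem_Collect_eq mult.commute pos_divide_le_eq)
  then have "c / a \<le> b" unfolding b_def by (intro cInf_greatest[OF neH])
  then have "c \<le> a * b" using a1 by (simp add: divide_le_eq mult.commute)
  then show ?thesis unfolding tb a_def b_def c_def .
qed

end
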